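(* Let $T$ be a tree with colour classes $A$ and $B$ such that $a=|A|\le|B|$ and $k=\min\{d_T(x):x\in A\}\ge 2$. Let $\tilde T\in\mathcal{H}(T)$ be obtained from $T$ by a vertex split on a set $U\subseteq V(T)$, and let $S=U\cap A$ be the set of splitting vertices in $A$, $s=|S|$. If $s\ge 1$, then $\nu(\tilde T)\ge a-1+k$.
   Context: $\nu(G)$ is the matching number. A vertex split on a vertex $v$ of $H$ replaces $v$ by an independent set of $d(v)$ new vertices, each adjacent to exactly one vertex of $N_H(v)$, distinct new vertices adjacent to distinct neighbours; a vertex split on $U\subseteq V(H)$ applies this to the vertices of $U$ one by one. The splitting family $\mathcal{H}(H)$ is the family of all graphs obtained from $H$ by a vertex split on some $U\subseteq V(H)$. *)

theory Defs
  imports Main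
begin

definition simple_graph :: "'a set \<Rightarrow> 'a set set \<Rightarrow> bool" where
  "simple_graph V E \<longleftrightarrow> finite V \<and>
     (\<forall>e\<in>E. \<exists>x y. x \<noteq> y \<and> x \<in> V \<and> y \<in> V \<and> e = {x, y})"

definition degree :: "'a set set \<Rightarrow> 'a \<Rightarrow> nat" where
  "degree E x = card {y. {x, y} \<in> E}"

definition adj_rel :: "'a set set \<Rightarrow> ('a \<times> 'a) set" where
  "adj_rel E = {(x, y). {x, y} \<in> E}"

definition connected_graph :: "'a set \<Rightarrow> 'a set set \<Rightarrow> bool" where
  "connected_graph V E \<longleftrightarrow> V \<noteq> {} \<and> (\<forall>x\<in>V. \<forall>y\<in>V. (x, y) \<in> (adj_rel E)\<^sup>*)"

definition is_cycle :: "'a set set \<Rightarrow> 'a list \<Rightarrow> bool" where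
  "is_cycle E cs \<longleftrightarrow> length cs \<ge> 3 \<and> distinct cs \<and>
     (\<forall>i. Suc i < length cs \<longrightarrow> {cs ! i, cs ! Suc i} \<in> E) \<and>
     {last cs, hd cs} \<in> E"

definition is_tree :: "'a set \<Rightarrow> 'a set set \<Rightarrow> bool" where
  "is_tree V E \<longleftrightarrow> simple_graph V E \<and> connected_graph V E \<and> (\<nexists>cs. is_cycle E cs)"

definition colour_classes :: "'a set \<Rightarrow> 'a set set \<Rightarrow> 'a set \<Rightarrow> 'a set \<Rightarrow> bool" where
  "colour_classes V E A B \<longleftrightarrow> A \<union> B = V \<and> A \<inter> B = {} \<and>
     (\<forall>x y. {x, y} \<in> E \<longrightarrow> (x \<in> A \<and> y \<in> B) \<or> (x \<in> B \<and> y \<in> A))"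

definition is_matching :: "'a set set \<Rightarrow> 'a set set \<Rightarrow> bool" where
  "is_matching E M \<longleftrightarrow> M \<subseteq> E \<and> (\<forall>e1\<in>M. \<forall>e2\<in>M. e1 \<noteq> e2 \<longrightarrow> e1 \<inter> e2 = {})"

definition matching_number :: "'a set set \<Rightarrow> nat" where
  "matching_number E = Max {card M | M. is_matching E M}"

text \<open>A vertex x not in U is kept as (x, None); a vertex x in U
  is replaced by the new vertices (x, Some y), one for each neighbour y of x, where
  (x, Some y) is adjacent only to (the copy of) y. Splitting the vertices of U one by
  one yields exactly this graph (up to isomorphism), independently of the order.\<close>
definition split_vertex :: "'a set \<Rightarrow> 'a \<Rightarrow> 'a \<Rightarrow> 'a \<times> 'a option" where
  "split_vertex U x y = (x, if x \<in> U then Some y else None)"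

definition split_V :: "'a set \<Rightarrow> 'a set set \<Rightarrow> 'a set \<Rightarrow> ('a \<times> 'a option) set" where
  "split_V V E U = {(x, None) | x. x \<in> V \<and> x \<notin> U} \<union> {(x, Some y) | x y. x \<in> U \<and> {x, y} \<in> E}"

definition split_E :: "'a set set \<Rightarrow> 'a set \<Rightarrow> ('a \<times> 'a option) set set" where
  "split_E E U = {{split_vertex U x y, split_vertex U y x} | x y. {x, y} \<in> E}"

end

theory Submission
  imports Defs
begin


locale rt =
  fixes V :: "'a set" and E A B v
  assumes tree: "is_tree V E" and col: "colour_classes V E A B" and vA: "v \<in> A"
begin

definition walk :: "(nat \<Rightarrow> 'a) \<Rightarrow> nat \<Rightarrow> bool" where
  "walk f n \<longleftrightarrow> (\<forall>i<n. {f i, f (Suc i)} \<in> E)"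
definition reach :: "'a \<Rightarrow> nat \<Rightarrow> bool" where
  "reach x n \<longleftrightarrow> (\<exists>f. f 0 = v \<and> f n = x \<and> walk f n)"
definition dist :: "'a \<Rightarrow> nat" where "dist x = (LEAST n. reach x n)"

lemma edge_V: "{x,y} \<in> E \<Longrightarrow> x \<in> V \<and> y \<in> V \<and> x \<noteq> y"
proof -
  assume e: "{x,y} \<in> E"
  have "simple_graph V E" using tree unfolding is_tree_def by blast
  then obtain a b where "a \<noteq> b" "a \<in> V" "b \<in> V" "{x,y} = {a,b}"
    using e unfolding simple_graph_def by blast
  then show ?thesis by (auto simp: doubleton_eq_iff)
qed

lemma edge_sym: "{x,y} \<in> E \<Longrightarrow> {y,x} \<in> E"
  by (simp add: insert_commute)

lemma edge_col: "{x,y} \<in> E \<Longrightarrow> (x \<in> A \<longleftrightarrow> y \<notin> A)"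
  using col unfolding colour_classes_def by blast

lemma reach_V: "x \<in> V \<Longrightarrow> \<exists>n. reach x n"
proof -
  assume x: "x \<in> V"
  have vV: "v \<in> V" using vA col unfolding colour_classes_def by blast
  have "(v, x) \<in> (adj_rel E)\<^sup>*" using tree x vV unfolding is_tree_def connected_graph_def by blast
  then obtain n where "(v, x) \<in> (adj_rel E) ^^ n" using rtrancl_power by blast
  then obtain f where "f 0 = v" "f n = x" "\<forall>i<n. (f i, f (Suc i)) \<in> adj_rel E"
    using relpow_fun_conv by metis
  then show ?thesis unfolding reach_def walk_def adj_rel_def by auto
qed

lemma dist_reach: "x \<in> V \<Longrightarrow> reach x (dist x)"
  unfolding dist_def using reach_V by (metis LeastI_ex)

lemma dist_le: "reach x n \<Longrightarrow> dist x \<le> n"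
  unfolding dist_def by (rule Least_le)

lemma reach_0: "reach x 0 \<Longrightarrow> x = v"
  unfolding reach_def by auto

lemma walk_mono: "walk f n \<Longrightarrow> m \<le> n \<Longrightarrow> walk f m"
  unfolding walk_def by auto

lemma reach_step: "reach x n \<Longrightarrow> {x,y} \<in> E \<Longrightarrow> reach y (Suc n)"
proof -
  assume "reach x n" "{x,y} \<in> E"
  then obtain f where f: "f 0 = v" "f n = x" "walk f n" unfolding reach_def by blast
  let ?g = "f(Suc n := y)"
  have "walk ?g (Suc n)" using f \<open>{x,y} \<in> E\<close> unfolding walk_def
    by (auto simp: less_Suc_eq)
  then show ?thesis unfolding reach_def using f by (intro exI[of _ ?g]) auto
qed

lemma walk_parity: "walk f n \<Longrightarrow> f 0 = v \<Longrightarrow> (f n \<in> A \<longleftrightarrow> even n)"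
proof (induction n)
  case 0 then show ?case using vA by simp
next
  case (Suc n)
  then have "walk f n" using walk_mono by fastforce
  then have "f n \<in> A \<longleftrightarrow> even n" using Suc by blast
  moreover have "{f n, f (Suc n)} \<in> E" using Suc.prems unfolding walk_def by blast
  ultimately show ?case using edge_col[of "f n" "f (Suc n)"] by (cases "f (Suc n) \<in> A") simp_all
qed

lemma reach_parity: "reach x n \<Longrightarrow> (x \<in> A \<longleftrightarrow> even n)"
  unfolding reach_def using walk_parity by blast

lemma nb_dist: "{x,y} \<in> E \<Longrightarrow> dist y = Suc (dist x) \<or> dist x = Suc (dist y)"
proof -
  assume e: "{x,y} \<in> E"
  have V: "x \<in> V" "y \<in> V" using edge_V e by auto
  have r1: "reach x (dist x)" "reach y (dist y)" using V dist_reach by auto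
  have "dist y \<le> Suc (dist x)" using reach_step[OF r1(1) e] dist_le by blast
  moreover have "dist x \<le> Suc (dist y)" using reach_step[OF r1(2) edge_sym[OF e]] dist_le by blast
  moreover have "x \<in> A \<longleftrightarrow> even (dist x)" "y \<in> A \<longleftrightarrow> even (dist y)"
    using r1 reach_parity by auto
  moreover have "x \<in> A \<longleftrightarrow> y \<notin> A" using edge_col e by blast
  ultimately have "dist y \<noteq> dist x" by auto
  then show ?thesis using \<open>dist y \<le> Suc (dist x)\<close> \<open>dist x \<le> Suc (dist y)\<close> by linarith
qed

lemma shortest:
  assumes f: "f 0 = v" "walk f n" "dist (f n) = n" and i: "i \<le> n"
  shows "dist (f i) = i"
proof -
  have "reach (f i) i" using f i walk_mono unfolding reach_def by blast
  then have le: "dist (f i) \<le> i" by (rule dist_le)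
  show ?thesis
  proof (rule ccontr)
    assume "dist (f i) \<noteq> i"
    then have lt: "dist (f i) < i" using le by simp
    define m where "m = dist (f i)"
    have "f i \<in> V"
    proof (cases "i = 0")
      case True then show ?thesis using f vA col unfolding colour_classes_def by auto
    next
      case False
      then have ii: "i - 1 < n" "Suc (i - 1) = i" using i by auto
      then have "{f (i - 1), f (Suc (i - 1))} \<in> E" using f(2) unfolding walk_def by blast
      then have "{f (i - 1), f i} \<in> E" using ii by simp
      then show ?thesis using edge_V by blast
    qed
    then obtain g where g: "g 0 = v" "g m = f i" "walk g m"
      using dist_reach unfolding m_def reach_def by blast
    define h where "h j = (if j \<le> m then g j else f (j - m + i))" for j
    have "walk h (m + (n - i))" unfolding walk_def
    proof (intro allI impI)
      fix j assume j: "j < m + (n - i)"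
      show "{h j, h (Suc j)} \<in> E"
      proof (cases "j < m")
        case True then show ?thesis using g unfolding h_def walk_def by auto
      next
        case False
        then have "j - m + i < n" using j i by linarith
        then have "{f (j - m + i), f (Suc (j - m + i))} \<in> E" using f unfolding walk_def by blast
        moreover have "Suc j - m + i = Suc (j - m + i)" using False by simp
        ultimately show ?thesis using False g unfolding h_def
          by (cases "j = m") auto
      qed
    qed
    moreover have "h 0 = v" using g unfolding h_def by simp
    moreover have "h (m + (n - i)) = f n" unfolding h_def using i lt g m_def
      by (cases "n = i") auto
    ultimately have "reach (f n) (m + (n - i))" unfolding reach_def by blast
    then have "dist (f n) \<le> m + (n - i)" by (rule dist_le)
    then show False using f(3) lt i m_def by linarith
  qed
qed


lemma no_cycle: "is_cycle E cs \<Longrightarrow> False"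
  using tree unfolding is_tree_def by blast

lemma two_parents:
  assumes ne: "p1 \<noteq> p2" and e1: "{p1,w} \<in> E" and e2: "{p2,w} \<in> E"
    and dd: "dist p1 = dist p2" and dw: "dist w = Suc (dist p1)"
  shows False
proof -
  define n where "n = dist p1"
  have V: "p1 \<in> V" "p2 \<in> V" using e1 e2 edge_V by auto
  obtain f1 where f1: "f1 0 = v" "f1 n = p1" "walk f1 n"
    using dist_reach[OF V(1)] unfolding reach_def n_def by blast
  obtain f2 where f2: "f2 0 = v" "f2 n = p2" "walk f2 n"
    using dist_reach[OF V(2)] unfolding reach_def n_def dd by blast
  have d1: "\<And>i. i \<le> n \<Longrightarrow> dist (f1 i) = i"
    using shortest[OF f1(1) f1(3)] f1(2) n_def by simp
  have d2: "\<And>i. i \<le> n \<Longrightarrow> dist (f2 i) = i"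
    using shortest[OF f2(1) f2(3)] f2(2) n_def dd by simp
  define J where "J = {j. j \<le> n \<and> f1 j = f2 j}"
  define j where "j = Max J"
  have finJ: "finite J" unfolding J_def by simp
  have "0 \<in> J" unfolding J_def using f1 f2 by simp
  then have jJ: "j \<in> J" unfolding j_def using finJ Max_in by blast
  then have jn: "j \<le> n" and fj: "f1 j = f2 j" unfolding J_def by auto
  have jmax: "\<And>t. j < t \<Longrightarrow> t \<le> n \<Longrightarrow> f1 t \<noteq> f2 t"
  proof
    fix t assume "j < t" "t \<le> n" "f1 t = f2 t"
    then have "t \<in> J" unfolding J_def by simp
    then have "t \<le> j" unfolding j_def using finJ by simp
    then show False using \<open>j < t\<close> by simp
  qed
  have jlt: "j < n" using jn fj f1 f2 ne by (cases "j = n") auto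
  define m where "m = n - j"
  have m1: "m \<ge> 1" and nj: "n = j + m" unfolding m_def using jlt by auto
  define g where "g i = (if i \<le> m then f1 (j+i) else if i = Suc m then w else f2 (j + 2*m + 2 - i))" for i
  define dg where "dg i = (if i \<le> m then j+i else if i = Suc m then Suc n else j + 2*m + 2 - i)" for i
  have gd: "dist (g i) = dg i" if "i \<le> 2*m+1" for i
    unfolding g_def dg_def using d1 d2 dw n_def that nj by auto
  have inj: "inj_on g {0..<2*m+2}"
  proof (rule inj_onI)
    fix a b assume a: "a \<in> {0..<2*m+2}" and b: "b \<in> {0..<2*m+2}" and gab: "g a = g b"
    have ab1: "a \<le> 2*m+1" "b \<le> 2*m+1" using a b by auto
    have dab: "dg a = dg b" using gd[OF ab1(1)] gd[OF ab1(2)] gab by simp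
    show "a = b"
    proof (rule ccontr)
      assume "a \<noteq> b"
      have *: "False" if ab: "a < b" "a < 2*m+2" "b < 2*m+2" "dg a = dg b" "g a = g b" for a b
      proof -
        consider "b \<le> m" | "a \<le> m" "b = Suc m" | "a = Suc m" | "a \<le> m" "b > Suc m" | "a > Suc m"
          using ab by linarith
        then show False
        proof cases
          case 1 then show ?thesis using ab unfolding dg_def by auto
        next
          case 2 then show ?thesis using ab nj unfolding dg_def by auto
        next
          case 3 then show ?thesis using ab nj unfolding dg_def by auto
        next
          case 4
          then have t: "j + a = j + 2*m + 2 - b" using ab unfolding dg_def by auto
          have "g a = f1 (j + a)" "g b = f2 (j + 2*m + 2 - b)" using 4 unfolding g_def by auto
          then have "f1 (j+a) = f2 (j+a)" using t ab by simp
          moreover have "j < j + a" "j + a \<le> n" using t 4 ab nj by auto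
          ultimately show ?thesis using jmax by blast
        next
          case 5 then show ?thesis using ab unfolding dg_def by auto
        qed
      qed
      show False
      proof (cases "a < b")
        case True then show ?thesis using * a b dab gab by auto
      next
        case False then have "b < a" using \<open>a \<noteq> b\<close> by simp
        then show ?thesis using *[of b a] a b dab gab by auto
      qed
    qed
  qed
  define cs where "cs = map g [0..<2*m+2]"
  have len: "length cs = 2*m+2" unfolding cs_def by simp
  have nth: "\<And>i. i < 2*m+2 \<Longrightarrow> cs ! i = g i" unfolding cs_def by (simp del: upt_Suc)
  have "is_cycle E cs"
    unfolding is_cycle_def
  proof (intro conjI allI impI)
    show "3 \<le> length cs" using len m1 by simp
    show "distinct cs" unfolding cs_def using inj by (simp add: distinct_map del: upt_Suc)
  next
    fix i assume i: "Suc i < length cs"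
    then have cs: "cs ! i = g i" "cs ! Suc i = g (Suc i)" using nth len by auto
    consider "i < m" | "i = m" | "i = Suc m" | "i > Suc m" by linarith
    then show "{cs ! i, cs ! Suc i} \<in> E"
    proof cases
      case 1
      then have "j + i < n" using nj by simp
      then have "{f1 (j+i), f1 (Suc (j+i))} \<in> E" using f1 unfolding walk_def by blast
      then show ?thesis using cs 1 unfolding g_def by simp
    next
      case 2 then show ?thesis using cs e1 f1 nj unfolding g_def by simp
    next
      case 3 then show ?thesis using cs e2 f2 nj unfolding g_def by (simp add: insert_commute add.commute)
    next
      case 4
      define t where "t = j + 2*m + 1 - i"
      have tn: "t < n" "j + 2*m + 2 - i = Suc t" "j + 2*m + 2 - Suc i = t"
        using 4 i len nj unfolding t_def by arith+
      then have "{f2 t, f2 (Suc t)} \<in> E" using f2 unfolding walk_def by blast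
      then show ?thesis using cs 4 tn unfolding g_def by (simp add: insert_commute)
    qed
  next
    have "cs \<noteq> []" using len by auto
    then have "last cs = cs ! (2*m+1)" using len by (simp add: last_conv_nth)
    also have "\<dots> = g (2*m+1)" using nth by simp
    also have "\<dots> = f2 (Suc j)" unfolding g_def using m1 by simp
    finally have l: "last cs = f2 (Suc j)" .
    have "hd cs = cs ! 0" using \<open>cs \<noteq> []\<close> by (simp add: hd_conv_nth)
    then have h: "hd cs = f2 j" using nth[of 0] fj unfolding g_def by simp
    have "{f2 j, f2 (Suc j)} \<in> E" using f2 jlt unfolding walk_def by blast
    then show "{last cs, hd cs} \<in> E" using l h by (simp add: insert_commute)
  qed
  then show False by (rule no_cycle)
qed


lemma card2_obtain: "2 \<le> card S \<Longrightarrow> \<exists>a b. a \<in> S \<and> b \<in> S \<and> a \<noteq> b"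
proof (rule ccontr)
  assume c: "2 \<le> card S" "\<not> (\<exists>a b. a \<in> S \<and> b \<in> S \<and> a \<noteq> b)"
  then have fin: "finite S" using card.infinite by fastforce
  have "S = {} \<or> (\<exists>a. S = {a})" using c(2) by blast
  then have "card S \<le> 1" by auto
  then show False using c by simp
qed

lemma dist_v: "dist v = 0"
proof -
  have "reach v 0" unfolding reach_def walk_def by (intro exI[of _ "\<lambda>_. v"]) simp
  then show ?thesis using dist_le by fastforce
qed

lemma dist_pos: "x \<in> V \<Longrightarrow> x \<noteq> v \<Longrightarrow> dist x \<ge> 1"
proof (rule ccontr)
  assume "x \<in> V" "x \<noteq> v" "\<not> dist x \<ge> 1"
  then have "dist x = 0" by simp
  then have "reach x 0" using dist_reach[of x] \<open>x \<in> V\<close> by metis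
  then show False using reach_0 \<open>x \<noteq> v\<close> by blast
qed

lemma child_ex:
  assumes x: "x \<in> A" "x \<noteq> v" and dg: "degree E x \<ge> 2"
  shows "\<exists>c. {x,c} \<in> E \<and> dist c = Suc (dist x)"
proof (rule ccontr)
  assume no: "\<not> ?thesis"
  obtain y1 y2 where y: "{x,y1} \<in> E" "{x,y2} \<in> E" "y1 \<noteq> y2"
    using card2_obtain[of "{y. {x,y} \<in> E}"] dg unfolding degree_def by auto
  have "dist x = Suc (dist y1)" "dist x = Suc (dist y2)" using nb_dist[OF y(1)] nb_dist[OF y(2)] no y by auto
  then show False using two_parents[OF y(3) edge_sym[OF y(1)] edge_sym[OF y(2)]] by simp
qed

definition sp :: "'a set \<Rightarrow> 'a \<Rightarrow> 'a \<Rightarrow> ('a \<times> 'a option) set" where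
  "sp U a b = {split_vertex U a b, split_vertex U b a}"

lemma meet: "sp U a b \<inter> sp U a' b' \<noteq> {} \<Longrightarrow>
  (a = a' \<and> (a \<in> U \<longrightarrow> b = b')) \<or> (a = b') \<or> (b = a') \<or> (b = b')"
  unfolding sp_def split_vertex_def by (auto split: if_splits)


lemma main:
  assumes vU: "v \<in> U" and degA: "\<And>x. x \<in> A \<Longrightarrow> degree E x \<ge> 2"
  shows "card A - 1 + degree E v \<le> matching_number (split_E E U)"
proof -
  have finV: "finite V" using tree unfolding is_tree_def simple_graph_def by blast
  have AV: "A \<subseteq> V" using col unfolding colour_classes_def by blast
  have finA: "finite A" using finV AV finite_subset by blast
  define N where "N = {y. {v,y} \<in> E}"
  have "N \<subseteq> V" unfolding N_def using edge_V by blast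
  then have finN: "finite N" using finV finite_subset by blast
  define c where "c x = (SOME c. {x,c} \<in> E \<and> dist c = Suc (dist x))" for x
  have cprop: "{x, c x} \<in> E \<and> dist (c x) = Suc (dist x)" if "x \<in> A - {v}" for x
  proof -
    have "\<exists>c. {x,c} \<in> E \<and> dist c = Suc (dist x)" using child_ex[of x] degA that by blast
    then show ?thesis unfolding c_def by (rule someI_ex)
  qed
  have cnA: "c x \<notin> A" if "x \<in> A - {v}" for x using cprop[OF that] edge_col that by blast
  have cnN: "c x \<notin> N" if x: "x \<in> A - {v}" for x
  proof
    assume "c x \<in> N"
    then have "{v, c x} \<in> E" unfolding N_def by simp
    then have "dist (c x) = Suc (dist v) \<or> dist v = Suc (dist (c x))" by (rule nb_dist)
    then have "dist (c x) \<le> 1" using dist_v by simp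
    moreover have "dist x \<ge> 1" using dist_pos x AV by blast
    ultimately show False using cprop[OF x] by simp
  qed
  have cinj: "x1 = x2" if x: "x1 \<in> A - {v}" "x2 \<in> A - {v}" "c x1 = c x2" for x1 x2
  proof (rule ccontr)
    assume ne: "x1 \<noteq> x2"
    have e1: "{x1, c x1} \<in> E" using cprop[OF x(1)] by simp
    have "{x2, c x2} \<in> E" using cprop[OF x(2)] by simp
    then have e2: "{x2, c x1} \<in> E" using x(3) by simp
    note e = e1 e2
    have "dist (c x1) = Suc (dist x1)" using cprop[OF x(1)] by simp
    moreover have "dist (c x2) = Suc (dist x2)" using cprop[OF x(2)] by simp
    ultimately have "dist x1 = dist x2" using x(3) by simp
    moreover have "dist (c x1) = Suc (dist x1)" using cprop[OF x(1)] by simp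
    ultimately show False using two_parents[OF ne e] by simp
  qed
  have NnA: "y \<notin> A" if "y \<in> N" for y using that edge_col vA unfolding N_def by blast
  have P1: "x1 = x2" if x: "x1 \<in> A - {v}" "x2 \<in> A - {v}" and m: "sp U x1 (c x1) \<inter> sp U x2 (c x2) \<noteq> {}" for x1 x2
  proof -
    have "x1 \<noteq> c x2" "c x1 \<noteq> x2" using cnA x by auto
    then show ?thesis using meet[OF m] cinj[OF x] by auto
  qed
  have P2: "sp U x (c x) \<inter> sp U v y = {}" if x: "x \<in> A - {v}" and y: "y \<in> N" for x y
  proof (rule ccontr)
    assume m: "sp U x (c x) \<inter> sp U v y \<noteq> {}"
    have "x \<noteq> v" "x \<noteq> y" "c x \<noteq> v" "c x \<noteq> y" using x NnA[OF y] cnA[OF x] cnN[OF x] vA y by auto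
    then show False using meet[OF m] by auto
  qed
  have P3: "y1 = y2" if y: "y1 \<in> N" "y2 \<in> N" and m: "sp U v y1 \<inter> sp U v y2 \<noteq> {}" for y1 y2
  proof -
    have "v \<noteq> y1" "v \<noteq> y2" using NnA y vA by auto
    then show ?thesis using meet[OF m] vU by auto
  qed
  define M1 where "M1 = (\<lambda>x. sp U x (c x)) ` (A - {v})"
  define M2 where "M2 = (\<lambda>y. sp U v y) ` N"
  define M where "M = M1 \<union> M2"
  have sp_ne: "sp U a b \<noteq> {}" for a b unfolding sp_def by simp
  have inj1: "inj_on (\<lambda>x. sp U x (c x)) (A - {v})"
  proof (rule inj_onI)
    fix a b assume a: "a \<in> A - {v}" and b: "b \<in> A - {v}" and eq: "sp U a (c a) = sp U b (c b)"
    have "sp U a (c a) \<inter> sp U b (c b) \<noteq> {}" using eq sp_ne by simp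
    then show "a = b" using P1[OF a b] by blast
  qed
  have inj2: "inj_on (\<lambda>y. sp U v y) N"
  proof (rule inj_onI)
    fix a b assume a: "a \<in> N" and b: "b \<in> N" and eq: "sp U v a = sp U v b"
    have "sp U v a \<inter> sp U v b \<noteq> {}" using eq sp_ne by simp
    then show "a = b" using P3[OF a b] by blast
  qed
  have disj: "M1 \<inter> M2 = {}"
  proof (rule ccontr)
    assume "M1 \<inter> M2 \<noteq> {}"
    then obtain x y where "x \<in> A - {v}" "y \<in> N" "sp U x (c x) = sp U v y"
      unfolding M1_def M2_def by blast
    then have "x \<in> A - {v}" "y \<in> N" "sp U x (c x) \<inter> sp U v y \<noteq> {}" using sp_ne by auto
    then show False using P2 by blast
  qed
  have cardM: "card M = card (A - {v}) + card N"
    unfolding M_def using card_Un_disjoint[of M1 M2] disj finA finN card_image[OF inj1] card_image[OF inj2]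
    unfolding M1_def M2_def by simp
  have "card (A - {v}) = card A - 1" using finA vA by simp
  moreover have "card N = degree E v" unfolding N_def degree_def by simp
  ultimately have cM: "card M = card A - 1 + degree E v" using cardM by simp
  have sub: "M \<subseteq> split_E E U"
  proof
    fix e assume "e \<in> M"
    then consider x where "x \<in> A - {v}" "e = sp U x (c x)" | y where "y \<in> N" "e = sp U v y"
      unfolding M_def M1_def M2_def by blast
    then show "e \<in> split_E E U"
    proof cases
      case 1 then show ?thesis using cprop[OF 1(1)] unfolding split_E_def sp_def by blast
    next
      case 2 then show ?thesis unfolding split_E_def sp_def N_def by blast
    qed
  qed
  have match: "is_matching (split_E E U) M"
    unfolding is_matching_def
  proof (intro conjI ballI impI)
    show "M \<subseteq> split_E E U" by (rule sub)
  next
    fix e1 e2 assume e: "e1 \<in> M" "e2 \<in> M" "e1 \<noteq> e2"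
    show "e1 \<inter> e2 = {}"
    proof (rule ccontr)
      assume m: "e1 \<inter> e2 \<noteq> {}"
      consider "e1 \<in> M1" "e2 \<in> M1" | "e1 \<in> M1" "e2 \<in> M2" | "e1 \<in> M2" "e2 \<in> M1" | "e1 \<in> M2" "e2 \<in> M2"
        using e unfolding M_def by blast
      then show False
      proof cases
        case 1
        then obtain x1 x2 where "x1 \<in> A - {v}" "x2 \<in> A - {v}" "e1 = sp U x1 (c x1)" "e2 = sp U x2 (c x2)"
          unfolding M1_def by blast
        then show False using P1[of x1 x2] m e(3) by simp
      next
        case 2
        then obtain x y where "x \<in> A - {v}" "y \<in> N" "e1 = sp U x (c x)" "e2 = sp U v y"
          unfolding M1_def M2_def by blast
        then show False using P2[of x y] m by simp
      next
        case 3
        then obtain x y where "x \<in> A - {v}" "y \<in> N" "e2 = sp U x (c x)" "e1 = sp U v y"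
          unfolding M1_def M2_def by blast
        then show False using P2[of x y] m by (simp add: Int_commute)
      next
        case 4
        then obtain y1 y2 where "y1 \<in> N" "y2 \<in> N" "e1 = sp U v y1" "e2 = sp U v y2"
          unfolding M2_def by blast
        then show False using P3[of y1 y2] m e(3) by simp
      qed
    qed
  qed
  have finE: "finite (split_E E U)"
  proof -
    have "split_E E U \<subseteq> (\<lambda>p. {split_vertex U (fst p) (snd p), split_vertex U (snd p) (fst p)}) ` (V \<times> V)"
    proof
      fix e assume "e \<in> split_E E U"
      then obtain x y where xy: "e = {split_vertex U x y, split_vertex U y x}" "{x,y} \<in> E"
        unfolding split_E_def by blast
      then have "(x,y) \<in> V \<times> V" using edge_V by blast
      then show "e \<in> (\<lambda>p. {split_vertex U (fst p) (snd p), split_vertex U (snd p) (fst p)}) ` (V \<times> V)"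
        using xy by (intro image_eqI[of _ _ "(x,y)"]) auto
    qed
    moreover have "finite (V \<times> V)" using finV by simp
    ultimately show ?thesis using finite_subset by blast
  qed
  have fin: "finite {card M | M. is_matching (split_E E U) M}"
  proof (rule finite_subset)
    show "{card M | M. is_matching (split_E E U) M} \<subseteq> card ` Pow (split_E E U)"
      unfolding is_matching_def by auto
    show "finite (card ` Pow (split_E E U))" using finE by simp
  qed
  have "card M \<le> matching_number (split_E E U)"
    unfolding matching_number_def using fin match by (intro Max_ge) auto
  then show ?thesis using cM by simp
qed

end

theorem lemma2p5:
  fixes V :: "'a set" and E :: "'a set set" and A B U :: "'a set" and k :: nat
  assumes "is_tree V E"
    and "colour_classes V E A B"
    and "card A \<le> card B"
    and "k = Min (degree E ` A)"
    and "k \<ge> 2"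
    and "U \<subseteq> V"
    and "card (U \<inter> A) \<ge> 1"
  shows "matching_number (split_E E U) \<ge> card A - 1 + k"
proof -
  have "U \<inter> A \<noteq> {}" using assms(7) by (metis card.empty not_one_le_zero)
  then obtain v where v: "v \<in> U" "v \<in> A" by blast
  interpret rt V E A B v using assms(1,2) v by unfold_locales auto
  have finV: "finite V" using assms(1) unfolding is_tree_def simple_graph_def by blast
  have "A \<subseteq> V" using assms(2) unfolding colour_classes_def by blast
  then have finA: "finite A" using finV finite_subset by blast
  have kle: "k \<le> degree E x" if "x \<in> A" for x
    using assms(4) finA that by simp
  have "card A - 1 + degree E v \<le> matching_number (split_E E U)"
  proof (rule main)
    show "v \<in> U" by (rule v(1))
    show "\<And>x. x \<in> A \<Longrightarrow> 2 \<le> degree E x" using kle assms(5) by fastforce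
  qed
  moreover have "k \<le> degree E v" using kle v(2) .
  ultimately show ?thesis by simp
qed

end
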